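(* Let $G$ be a topological group. Then $G$ is $\alpha_{1.5}$ if and only if $G$ is $\alpha_1$.
   Context: Convention: a "sequence" is a countably infinite set. A countably infinite set $A$ in a topological space $X$ converges to $x\in X$ if $x\notin A$ and every neighborhood of $x$ contains all but finitely many elements of $A$ (equivalently, some or every bijective enumeration of $A$ converges to $x$ with no term equal to $x$). A topological space $X$ is $\alpha_1$ (respectively $\alpha_{1.5}$) if for each $x\in X$ and all pairwise disjoint sequences $S_1,S_2,\dots\subseteq X$, each converging to $x$, there is a sequence $S\subseteq\bigcup_n S_n$ converging to $x$ such that $S_n\setminus S$ is finite for all $n$ (respectively, for infinitely many $n$). *)

theory Defs
  imports "HOL-Analysis.Analysis"
begin

text \<open>A "sequence" is a countably infinite set. A sequence A converges to x
  if x is not in A and every neighbourhood of x contains all but finitely many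
  elements of A.\<close>
definition seq_converges :: "'a::topological_space set \<Rightarrow> 'a \<Rightarrow> bool" where
  "seq_converges A x \<longleftrightarrow> countable A \<and> infinite A \<and> x \<notin> A \<and>
     (\<forall>U. open U \<and> x \<in> U \<longrightarrow> finite (A - U))"

definition alpha1_space :: "'a::topological_space itself \<Rightarrow> bool" where
  "alpha1_space _ \<longleftrightarrow>
     (\<forall>(x::'a) (S::nat \<Rightarrow> 'a set).
        (\<forall>m n. m \<noteq> n \<longrightarrow> S m \<inter> S n = {}) \<and> (\<forall>n. seq_converges (S n) x) \<longrightarrow>
        (\<exists>T. T \<subseteq> (\<Union>n. S n) \<and> seq_converges T x \<and> (\<forall>n. finite (S n - T))))"

definition alpha1_5_space :: "'a::topological_space itself \<Rightarrow> bool" where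
  "alpha1_5_space _ \<longleftrightarrow>
     (\<forall>(x::'a) (S::nat \<Rightarrow> 'a set).
        (\<forall>m n. m \<noteq> n \<longrightarrow> S m \<inter> S n = {}) \<and> (\<forall>n. seq_converges (S n) x) \<longrightarrow>
        (\<exists>T. T \<subseteq> (\<Union>n. S n) \<and> seq_converges T x \<and> infinite {n. finite (S n - T)}))"

definition topological_group :: "'a::{topological_space, group_add} itself \<Rightarrow> bool" where
  "topological_group _ \<longleftrightarrow>
     continuous_on UNIV (\<lambda>p::'a \<times> 'a. fst p + snd p) \<and> continuous_on UNIV (uminus :: 'a \<Rightarrow> 'a)"

end

theory Submission imports Defs begin

lemma pick_seq:
  fixes A :: "nat \<Rightarrow> 'a::group_add set" and c :: "nat \<Rightarrow> 'a" and x0 :: 'a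
  assumes inf: "\<And>j. infinite (A j)"
  shows "\<exists>f. (\<forall>j. f j \<in> A j \<and> c j + f j \<noteq> x0) \<and>
    (\<forall>i j. i \<noteq> j \<longrightarrow> f j \<noteq> f i \<and> f j \<noteq> c i + f i \<and> c j + f j \<noteq> c i + f i)"
proof -
  define Q where "Q = (\<lambda>n (xs::'a list) ys. \<exists>z. ys = xs @ [z] \<and> z \<in> A n \<and> c n + z \<noteq> x0 \<and>
     (\<forall>i<n. z \<noteq> xs!i \<and> z \<noteq> c i + xs!i \<and> c n + z \<noteq> xs!i \<and> c n + z \<noteq> c i + xs!i))"
  have step: "\<exists>ys. length ys = Suc n \<and> Q n xs ys" if "length xs = n" for n xs
  proof -
    define bad where "bad = set xs \<union> (\<lambda>i. c i + xs!i) ` {..<n} \<union> (\<lambda>u. - c n + u) ` (set xs \<union> (\<lambda>i. c i + xs!i) ` {..<n}) \<union> {- c n + x0}"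
    have "finite bad" unfolding bad_def by auto
    hence "infinite (A n - bad)" using inf[of n] by auto
    then obtain z where "z \<in> A n - bad" using infinite_imp_nonempty by blast
    hence z: "z \<in> A n" "z \<notin> bad" by auto
    have "c n + z \<noteq> x0" using z(2) unfolding bad_def
      by (metis UnI2 add_minus_cancel insertI1)
    moreover have "\<forall>i<n. z \<noteq> xs!i \<and> z \<noteq> c i + xs!i \<and> c n + z \<noteq> xs!i \<and> c n + z \<noteq> c i + xs!i"
    proof (intro allI impI)
      have key: "c n + z \<notin> set xs \<union> (\<lambda>i. c i + xs!i) ` {..<n}"
      proof
        assume "c n + z \<in> set xs \<union> (\<lambda>i. c i + xs!i) ` {..<n}"
        hence "-c n + (c n + z) \<in> (+) (-c n) ` (set xs \<union> (\<lambda>i. c i + xs!i) ` {..<n})" by blast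
        thus False using z(2) unfolding bad_def by (simp add: minus_add_cancel)
      qed
      fix i assume i: "i < n"
      have "xs!i \<in> set xs" using i that by auto
      moreover have "c i + xs!i \<in> (\<lambda>i. c i + xs!i) ` {..<n}" using i by auto
      ultimately show "z \<noteq> xs!i \<and> z \<noteq> c i + xs!i \<and> c n + z \<noteq> xs!i \<and> c n + z \<noteq> c i + xs!i"
      proof -
        have a1: "z \<notin> set xs" and a2: "z \<notin> (\<lambda>i. c i + xs!i) ` {..<n}"
          using z(2) unfolding bad_def by blast+
        have k1: "c n + z \<notin> set xs" and k2: "c n + z \<notin> (\<lambda>i. c i + xs!i) ` {..<n}"
          using key by blast+
        show ?thesis
        proof (intro conjI)
          show "z \<noteq> xs!i" using a1 \<open>xs!i \<in> set xs\<close> by metis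
          show "z \<noteq> c i + xs!i" using a2 \<open>c i + xs!i \<in> _\<close> by metis
          show "c n + z \<noteq> xs!i" using k1 \<open>xs!i \<in> set xs\<close> by metis
          show "c n + z \<noteq> c i + xs!i" using k2 \<open>c i + xs!i \<in> _\<close> by metis
        qed
      qed
    qed
    ultimately show ?thesis using z that unfolding Q_def by (intro exI[of _ "xs @ [z]"]) auto
  qed
  have "\<exists>F. \<forall>n. length (F n) = n \<and> Q n (F n) (F (Suc n))"
    by (rule dependent_nat_choice) (use step in auto)
  then obtain F where F: "\<And>n. length (F n) = n" "\<And>n. Q n (F n) (F (Suc n))" by blast
  have pre: "F m ! i = F (Suc i) ! i" if "i < m" for i m
    using that
  proof (induction m)
    case 0 then show ?case by simp
  next
    case (Suc m)
    obtain z where "F (Suc m) = F m @ [z]" using F(2)[of m] unfolding Q_def by blast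
    then show ?case using Suc F(1)[of m]
      by (cases "i < m") (auto simp: nth_append less_Suc_eq)
  qed
  define f where "f j = F (Suc j) ! j" for j
  have fj: "f j \<in> A j \<and> c j + f j \<noteq> x0 \<and> (\<forall>i<j. f j \<noteq> f i \<and> f j \<noteq> c i + f i \<and> c j + f j \<noteq> f i \<and> c j + f j \<noteq> c i + f i)" for j
  proof -
    obtain z where z: "F (Suc j) = F j @ [z]" "z \<in> A j" "c j + z \<noteq> x0"
      "\<forall>i<j. z \<noteq> F j!i \<and> z \<noteq> c i + F j!i \<and> c j + z \<noteq> F j!i \<and> c j + z \<noteq> c i + F j!i"
      using F(2)[of j] unfolding Q_def by blast
    have "f j = z" using z(1) F(1)[of j] unfolding f_def by (metis nth_append_length)
    moreover have "F j ! i = f i" if "i < j" for i using pre[OF that] unfolding f_def by simp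
    ultimately show ?thesis using z by auto
  qed
  have A: "\<forall>j. f j \<in> A j \<and> c j + f j \<noteq> x0" using fj by blast
  have B: "\<forall>i j. i \<noteq> j \<longrightarrow> f j \<noteq> f i \<and> f j \<noteq> c i + f i \<and> c j + f j \<noteq> c i + f i"
  proof (intro allI impI)
    fix i j :: nat assume "i \<noteq> j"
    then consider "i < j" | "j < i" by linarith
    then show "f j \<noteq> f i \<and> f j \<noteq> c i + f i \<and> c j + f j \<noteq> c i + f i"
    proof cases
      case 1 then show ?thesis using fj[of j] by auto
    next
      case 2 then show ?thesis using fj[of i] by metis
    qed
  qed
  show ?thesis using A B by blast
qed


lemma nbhd2:
  fixes f :: "'a::topological_space \<times> 'a \<Rightarrow> 'a"
  assumes "continuous_on UNIV f" "open U" "f (x,x) \<in> U"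
  shows "\<exists>V. open V \<and> x \<in> V \<and> (\<forall>p\<in>V. \<forall>q\<in>V. f (p,q) \<in> U)"
proof -
  have "open (f -` U)" using assms open_vimage by blast
  moreover have "(x,x) \<in> f -` U" using assms by simp
  ultimately obtain A B where AB: "open A" "open B" "(x,x) \<in> A \<times> B" "A \<times> B \<subseteq> f -` U"
    by (rule open_prod_elim)
  show ?thesis
    by (rule exI[of _ "A \<inter> B"]) (use AB in auto)
qed

lemma cadd:
  fixes g h :: "'b::topological_space \<Rightarrow> 'a::{topological_space,plus}"
  assumes "continuous_on UNIV (\<lambda>p::'a\<times>'a. fst p + snd p)" "continuous_on UNIV g" "continuous_on UNIV h"
  shows "continuous_on UNIV (\<lambda>p. g p + h p)"
  using continuous_on_compose2[OF assms(1) continuous_on_Pair[OF assms(2,3)]] by simp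

theorem theorem1p2:
  assumes "topological_group TYPE('a::{topological_space, group_add})"
  shows "alpha1_5_space TYPE('a) \<longleftrightarrow> alpha1_space TYPE('a)"
proof
  assume a1: "alpha1_space TYPE('a)"
  show "alpha1_5_space TYPE('a)" unfolding alpha1_5_space_def
  proof (intro allI impI)
    fix x :: 'a and S :: "nat \<Rightarrow> 'a set"
    assume "(\<forall>m n. m \<noteq> n \<longrightarrow> S m \<inter> S n = {}) \<and> (\<forall>n. seq_converges (S n) x)"
    from a1[unfolded alpha1_space_def, rule_format, OF this] obtain T
      where T: "T \<subseteq> (\<Union>n. S n)" "seq_converges T x" "\<forall>n. finite (S n - T)" by blast
    have "{n. finite (S n - T)} = UNIV" using T(3) by blast
    then show "\<exists>T. T \<subseteq> (\<Union>n. S n) \<and> seq_converges T x \<and> infinite {n. finite (S n - T)}"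
      using T by (intro exI[of _ T]) simp
  qed
next
  assume a15: "alpha1_5_space TYPE('a)"
  from assms have addc: "continuous_on UNIV (\<lambda>p::'a\<times>'a. fst p + snd p)"
    and negc: "continuous_on UNIV (uminus::'a\<Rightarrow>'a)" by (simp_all add: topological_group_def)
  show "alpha1_space TYPE('a)" unfolding alpha1_space_def
  proof (intro allI impI)
    fix x :: 'a and S :: "nat \<Rightarrow> 'a set"
    assume H: "(\<forall>m n. m \<noteq> n \<longrightarrow> S m \<inter> S n = {}) \<and> (\<forall>n. seq_converges (S n) x)"
    hence conv: "\<And>n. seq_converges (S n) x" by auto
    have cS: "countable (S n)" "infinite (S n)" "x \<notin> S n" for n
      using conv[of n] unfolding seq_converges_def by auto
    have cSU: "finite (S n - U)" if "open U" "x \<in> U" for n U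
      using conv[of n] that unfolding seq_converges_def by auto
    define en where "en k = from_nat_into (S k)" for k
    have enb: "bij_betw (en k) UNIV (S k)" for k
      unfolding en_def by (rule bij_betw_from_nat_into[OF cS(1) cS(2)])
    have en_in: "en k i \<in> S k" for k i by (rule bij_betw_apply[OF enb]) simp
    have en_inj: "inj (en k)" for k by (rule bij_betw_imp_inj_on[OF enb])
    define N where "N j = fst (prod_decode j)" for j
    define K where "K j = fst (prod_decode (snd (prod_decode j)))" for j
    define I where "I j = snd (prod_decode (snd (prod_decode j)))" for j
    define cc where "cc j = en (K j) (I j) + - x" for j
    obtain f where f1: "\<And>j. f j \<in> S (N j) \<and> cc j + f j \<noteq> x"
      and f2: "\<And>i j. i \<noteq> j \<Longrightarrow> f j \<noteq> f i \<and> f j \<noteq> cc i + f i \<and> cc j + f j \<noteq> cc i + f i"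
      using pick_seq[of "\<lambda>j. S (N j)" cc x] cS(2) by blast
    define enc where "enc n k i = prod_encode (n, prod_encode (k,i))" for n k i
    have dec: "N (enc n k i) = n" "K (enc n k i) = k" "I (enc n k i) = i" for n k i
      by (simp_all add: N_def K_def I_def enc_def)
    define g where "g n k i = f (enc n k i)" for n k i
    define h where "h n k i = en k i + - x + g n k i" for n k i
    have h_eq: "h n k i = cc (enc n k i) + f (enc n k i)" for n k i
      by (simp add: h_def g_def cc_def dec)
    have g_in: "g n k i \<in> S n" for n k i using f1[of "enc n k i"] by (simp add: g_def dec)
    have h_ne: "h n k i \<noteq> x" for n k i using f1[of "enc n k i"] by (simp add: h_eq)
    have dist: "g n k i \<noteq> g n' k' i' \<and> g n k i \<noteq> h n' k' i' \<and> h n k i \<noteq> h n' k' i'"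
      if "(n,k,i) \<noteq> (n',k',i')" for n k i n' k' i'
    proof -
      have "enc n k i \<noteq> enc n' k' i'"
      proof
        assume "enc n k i = enc n' k' i'"
        hence "(N (enc n k i), K (enc n k i), I (enc n k i)) = (N (enc n' k' i'), K (enc n' k' i'), I (enc n' k' i'))" by simp
        thus False using that by (simp add: dec)
      qed
      then show ?thesis using f2[of "enc n' k' i'" "enc n k i"] by (simp add: g_def h_eq)
    qed
    define E where "E n = (\<lambda>(k,i). g n k i) ` ({..n} \<times> UNIV) \<union> (\<lambda>(k,i). h n k i) ` ({..n} \<times> UNIV)" for n
    have ginj: "inj_on (\<lambda>(k,i). g n k i) A" for n A
    proof (rule inj_onI)
      fix p q assume "p \<in> A" "q \<in> A" "(\<lambda>(k,i). g n k i) p = (\<lambda>(k,i). g n k i) q"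
      then show "p = q" using dist[of n "fst p" "snd p" n "fst q" "snd q"] by (cases p, cases q) auto
    qed
    have hinj: "inj_on (\<lambda>(k,i). h n k i) A" for n A
    proof (rule inj_onI)
      fix p q assume "p \<in> A" "q \<in> A" "(\<lambda>(k,i). h n k i) p = (\<lambda>(k,i). h n k i) q"
      then show "p = q" using dist[of n "fst p" "snd p" n "fst q" "snd q"] by (cases p, cases q) auto
    qed
    have ginj1: "inj (g n k)" for n k
    proof (rule injI)
      fix a b assume "g n k a = g n k b" thus "a = b" using dist[of n k a n k b] by auto
    qed
    have hinj1: "inj (h n k)" for n k
    proof (rule injI)
      fix a b assume "h n k a = h n k b" thus "a = b" using dist[of n k a n k b] by auto
    qed
    have gfin: "finite {(k,i). g n k i \<notin> W}" if "open W" "x \<in> W" for n W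
    proof (rule finite_imageD[OF _ ginj])
      show "finite ((\<lambda>(k,i). g n k i) ` {(k,i). g n k i \<notin> W})"
        by (rule finite_subset[OF _ cSU[OF that, of n]]) (auto simp: g_in)
    qed
    have enfin: "finite {i. en k i \<notin> W}" if "open W" "x \<in> W" for k W
    proof (rule finite_imageD)
      show "finite (en k ` {i. en k i \<notin> W})"
        by (rule finite_subset[OF _ cSU[OF that, of k]]) (auto simp: en_in)
      show "inj_on (en k) {i. en k i \<notin> W}" using en_inj by (simp add: inj_on_def)
    qed
    have Econv: "seq_converges (E n) x" for n
      unfolding seq_converges_def
    proof (intro conjI allI impI)
      show "countable (E n)" unfolding E_def by auto
      have "range (g n n) \<subseteq> E n" unfolding E_def by auto
      moreover have "inj (g n n)" by (rule ginj1)
      ultimately show "infinite (E n)" using range_inj_infinite finite_subset by metis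
      show "x \<notin> E n"
      proof
        assume "x \<in> E n"
        then obtain k i where "x = g n k i \<or> x = h n k i" unfolding E_def by auto
        thus False using g_in[of n k i] cS(3)[of n] h_ne[of n k i] by auto
      qed
      fix U assume U: "open U \<and> x \<in> U"
      have c1: "continuous_on UNIV (\<lambda>p::'a\<times>'a. fst p + (- x + snd p))"
        by (intro cadd[OF addc] continuous_on_fst continuous_on_snd continuous_on_id continuous_on_const)
      obtain W where W: "open W" "x \<in> W" "\<And>p q. p \<in> W \<Longrightarrow> q \<in> W \<Longrightarrow> p + (- x + q) \<in> U"
        using nbhd2[OF c1, of U x] U by auto
      have sub: "E n - U \<subseteq> (\<lambda>(k,i). g n k i) ` {(k,i). g n k i \<notin> U} \<union>
          (\<lambda>(k,i). h n k i) ` ({(k,i). g n k i \<notin> W} \<union> (SIGMA k:{..n}. {i. en k i \<notin> W}))"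
      proof
        fix y assume y: "y \<in> E n - U"
        then consider k i where "y = g n k i" "k \<le> n" | k i where "y = h n k i" "k \<le> n"
          unfolding E_def by auto
        then show "y \<in> (\<lambda>(k,i). g n k i) ` {(k,i). g n k i \<notin> U} \<union>
          (\<lambda>(k,i). h n k i) ` ({(k,i). g n k i \<notin> W} \<union> (SIGMA k:{..n}. {i. en k i \<notin> W}))"
        proof cases
          case 1 then show ?thesis using y by auto
        next
          case 2
          have "en k i \<notin> W \<or> g n k i \<notin> W"
          proof (rule ccontr)
            assume "\<not> ?thesis"
            hence "en k i + (- x + g n k i) \<in> U" using W(3) by blast
            moreover have "h n k i = en k i + (- x + g n k i)" unfolding h_def by (simp only: add.assoc)
            ultimately show False using y 2 by auto
          qed
          then show ?thesis using 2 by auto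
        qed
      qed
      have f1: "finite {(k,i). g n k i \<notin> U}" using gfin U by blast
      have f2: "finite {(k,i). g n k i \<notin> W}" using gfin W by blast
      have f3: "finite (SIGMA k:{..n}. {i. en k i \<notin> W})" using enfin W by blast
      show "finite (E n - U)" by (rule finite_subset[OF sub]) (use f1 f2 f3 in auto)
    qed
    have Edisj: "E m \<inter> E n = {}" if "m \<noteq> n" for m n
    proof -
      have False if "y \<in> E m" "y \<in> E n" for y
      proof -
        from \<open>y \<in> E m\<close> obtain k i where ki: "y = g m k i \<or> y = h m k i" unfolding E_def by auto
        from \<open>y \<in> E n\<close> obtain k' i' where ki': "y = g n k' i' \<or> y = h n k' i'" unfolding E_def by auto
        show False using ki ki' dist[of m k i n k' i'] dist[of n k' i' m k i] \<open>m \<noteq> n\<close> by auto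
      qed
      thus ?thesis by blast
    qed
    have "(\<forall>m n. m \<noteq> n \<longrightarrow> E m \<inter> E n = {}) \<and> (\<forall>n. seq_converges (E n) x)"
      using Econv Edisj by blast
    from a15[unfolded alpha1_5_space_def, rule_format, OF this]
    obtain T' where T': "T' \<subseteq> (\<Union>n. E n)" "seq_converges T' x" "infinite {n. finite (E n - T')}"
      by blast
    define NS where "NS = {n. finite (E n - T')}"
    define nk where "nk k = (SOME n. k \<le> n \<and> n \<in> NS)" for k
    have nk: "k \<le> nk k \<and> nk k \<in> NS" for k
    proof -
      have "\<exists>n. k \<le> n \<and> n \<in> NS" using T'(3) unfolding NS_def infinite_nat_iff_unbounded_le by blast
      then show ?thesis unfolding nk_def by (rule someI_ex)
    qed
    define T where "T = {en k i | k i. g (nk k) k i \<in> T' \<and> h (nk k) k i \<in> T'}"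
    have Tsub: "T \<subseteq> (\<Union>n. S n)" unfolding T_def using en_in by blast
    have Tfin: "finite (S k - T)" for k
    proof -
      let ?n = "nk k"
      have fE: "finite (E ?n - T')" using nk NS_def by blast
      have A1: "finite {i. g ?n k i \<notin> T'}"
      proof (rule finite_imageD)
        show "finite (g ?n k ` {i. g ?n k i \<notin> T'})"
          by (rule finite_subset[OF _ fE]) (use nk in \<open>auto simp: E_def\<close>)
        show "inj_on (g ?n k) {i. g ?n k i \<notin> T'}" using ginj1 by (simp add: inj_on_def)
      qed
      have A2: "finite {i. h ?n k i \<notin> T'}"
      proof (rule finite_imageD)
        show "finite (h ?n k ` {i. h ?n k i \<notin> T'})"
          by (rule finite_subset[OF _ fE]) (use nk in \<open>auto simp: E_def\<close>)
        show "inj_on (h ?n k) {i. h ?n k i \<notin> T'}" using hinj1 by (simp add: inj_on_def)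
      qed
      have "S k - T \<subseteq> en k ` ({i. g ?n k i \<notin> T'} \<union> {i. h ?n k i \<notin> T'})"
      proof
        fix y assume y: "y \<in> S k - T"
        have "S k = range (en k)" using enb by (simp add: bij_betw_def)
        then obtain i where i: "y = en k i" using y by blast
        then show "y \<in> en k ` ({i. g ?n k i \<notin> T'} \<union> {i. h ?n k i \<notin> T'})"
          using y unfolding T_def by blast
      qed
      then show ?thesis by (rule finite_subset) (use A1 A2 in auto)
    qed
    have Tconv: "seq_converges T x"
      unfolding seq_converges_def
    proof (intro conjI allI impI)
      show "countable T" by (rule countable_subset[OF Tsub]) (use cS(1) in auto)
      show "infinite T"
      proof
        assume "finite T"
        hence "finite (S 0 - T \<union> T)" using Tfin by blast
        moreover have "S 0 \<subseteq> S 0 - T \<union> T" by blast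
        ultimately show False using cS(2)[of 0] finite_subset by blast
      qed
      show "x \<notin> T" using Tsub cS(3) by blast
      fix U assume U: "open U \<and> x \<in> U"
      have c2: "continuous_on UNIV (\<lambda>p::'a\<times>'a. fst p + (- snd p + x))"
        by (intro cadd[OF addc] continuous_on_fst continuous_on_snd continuous_on_id continuous_on_const
            continuous_on_compose2[OF negc] subset_UNIV)
      obtain V where V: "open V" "x \<in> V" "\<And>p q. p \<in> V \<Longrightarrow> q \<in> V \<Longrightarrow> p + (- q + x) \<in> U"
        using nbhd2[OF c2, of U x] U by auto
      define F where "F = T' - V"
      have fF: "finite F" using T'(2) V unfolding F_def seq_converges_def by blast
      have sub1: "finite {n. y \<in> E n}" for y
      proof (cases "\<exists>n. y \<in> E n")
        case True
        then obtain n where "y \<in> E n" by blast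
        hence "{n. y \<in> E n} \<subseteq> {n}" using Edisj by blast
        then show ?thesis by (rule finite_subset) simp
      qed simp
      define B where "B = {n. E n \<inter> F \<noteq> {}}"
      have "B \<subseteq> (\<Union>y\<in>F. {n. y \<in> E n})" unfolding B_def by blast
      hence "finite B" by (rule finite_subset) (use fF sub1 in blast)
      then obtain M where M: "B \<subseteq> {..<M}" using finite_nat_bounded by blast
      have "T - U \<subseteq> (\<Union>k<M. S k - U)"
      proof
        fix y assume y: "y \<in> T - U"
        then obtain k i where ki: "y = en k i" "g (nk k) k i \<in> T'" "h (nk k) k i \<in> T'"
          unfolding T_def by blast
        show "y \<in> (\<Union>k<M. S k - U)"
        proof (cases "k < M")
          case True then show ?thesis using y ki en_in by blast
        next
          case False
          hence "nk k \<notin> B" using nk[of k] M by auto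
          hence EF: "E (nk k) \<inter> F = {}" unfolding B_def by blast
          have "g (nk k) k i \<in> E (nk k)" "h (nk k) k i \<in> E (nk k)"
            using nk[of k] unfolding E_def by auto
          hence "g (nk k) k i \<in> V" "h (nk k) k i \<in> V" using EF ki unfolding F_def by blast+
          hence "h (nk k) k i + (- g (nk k) k i + x) \<in> U" using V(3) by blast
          moreover have "h (nk k) k i + (- g (nk k) k i + x) = en k i"
            unfolding h_def by (simp add: add.assoc)
          ultimately have "en k i \<in> U" by simp
          then show ?thesis using y ki by blast
        qed
      qed
      moreover have "finite (\<Union>k<M. S k - U)" using cSU U by blast
      ultimately show "finite (T - U)" by (rule finite_subset)
    qed
    show "\<exists>T. T \<subseteq> (\<Union>n. S n) \<and> seq_converges T x \<and> (\<forall>n. finite (S n - T))"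
      using Tsub Tconv Tfin by blast
  qed
qed

end
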